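(* Let $f$ be a WTP function with reward function $F$. For any $\tilde x\in\widetilde{\mathcal{X}}_\ell$, any $\tilde y\in\widetilde{\mathcal{Y}}_{\mathcal{M}}(\tilde x)$ and any contention resolution scheme $\phi$ for $\mathcal{M}$, $$\mathbb{E}_{x\sim\Xi(\tilde x)}[F(x)]\ \ge\ \mathbb{E}_{x\sim\Xi(\tilde x)}\Big[\mathbb{E}_{y\sim\phi(Q(\tilde y,\tilde x,x))}[f(y)]\Big].$$
   Context: $\mathcal{M}=([n],\mathcal{I})$ is a matroid (identified with characteristic vectors of independent sets), $\mathcal{P}(\mathcal{M})$ its matroid polytope. $\mathcal{X}_\ell=\{x\in\{0,1\}^n:\sum_ix_i\le\ell\}$, $\widetilde{\mathcal{X}}_\ell=\{\tilde x\in[0,1]^n:\sum_i\tilde x_i\le\ell\}$, $\mathcal{Y}_{\mathcal{M}}(x)=\{y\in\{0,1\}^n:y\in\mathcal{M},y\le x\}$, $\widetilde{\mathcal{Y}}_{\mathcal{M}}(\tilde x)=\{\tilde y\in[0,1]^n:\tilde y\in\mathcal{P}(\mathcal{M}),\tilde y\le\tilde x\}$. A WTP function is $f(y)=\sum_{j\in\mathcal{C}}c_j\min\{b_j,y\cdot w_j\}$ ($\mathcal{C}$ finite, $c_j>0$, $b_j\in\mathbb{R}_{\ge0}\cup\{\infty\}$, $w_j\in\mathbb{R}^n_{\ge0}$), and $F(x)=\max_{y\in\mathcal{Y}_{\mathcal{M}}(x)}f(y)$. $\Xi$ is randomized pipage rounding (Chekuri–Vondrák–Zenklusen 2009) from $\widetilde{\mathcal{X}}_\ell$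 to $\mathcal{X}_\ell$: repeatedly pick two fractional coordinates $i,j$, set $\epsilon_1=\min(1-\tilde x_i,\tilde x_j)$, $\epsilon_2=\min(\tilde x_i,1-\tilde x_j)$, and with probability $\epsilon_2/(\epsilon_1+\epsilon_2)$ move to $(\tilde x_i+\epsilon_1,\tilde x_j-\epsilon_1)$, else to $(\tilde x_i-\epsilon_2,\tilde x_j+\epsilon_2)$, until integral (a lone fractional coordinate is handled as in that reference). The randomized map $Q(\tilde y,\tilde x,x)$: $a_i=\tilde y_i/\tilde x_i$ if $\tilde x_i\ne0$, else $0$; independent $c_i\sim\mathrm{Bernoulli}(a_i)$; output $\hat y$ with $\hat y_i=1$ iff $x_i=1$ and $c_i=1$. A contention resolution scheme for $\mathcal{M}$ is a randomized $\phi:\{0,1\}^n\to\mathcal{I}$ with $\phi(z)\le z$. *)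

theory Defs
  imports "HOL-Probability.Probability"
begin

text \<open>Ground set [n] is rendered as {0..<n}. Integral vectors in {0,1}^n are identified
with subsets of {0..<n}; fractional vectors are functions nat => real vanishing outside {0..<n}.\<close>

definition indic :: "nat set \<Rightarrow> nat \<Rightarrow> real" where
  "indic S = (\<lambda>i. if i \<in> S then 1 else 0)"

definition matroid :: "nat \<Rightarrow> nat set set \<Rightarrow> bool" where
  "matroid n I \<longleftrightarrow>
     (\<forall>A\<in>I. A \<subseteq> {0..<n}) \<and> {} \<in> I \<and>
     (\<forall>A B. A \<in> I \<longrightarrow> B \<subseteq> A \<longrightarrow> B \<in> I) \<and>
     (\<forall>A B. A \<in> I \<longrightarrow> B \<in> I \<longrightarrow> card A < card B \<longrightarrow> (\<exists>e\<in>B - A. insert e A \<in> I))"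

definition matroid_polytope :: "nat \<Rightarrow> nat set set \<Rightarrow> (nat \<Rightarrow> real) set" where
  "matroid_polytope n I = {y. \<exists>mu. (\<forall>A\<in>I. mu A \<ge> 0) \<and> (\<Sum>A\<in>I. mu A) = 1 \<and>
       y = (\<lambda>i. \<Sum>A\<in>I. mu A * indic A i)}"

definition frac_box :: "nat \<Rightarrow> (nat \<Rightarrow> real) set" where
  "frac_box n = {x. (\<forall>i<n. 0 \<le> x i \<and> x i \<le> 1) \<and> (\<forall>i\<ge>n. x i = 0)}"

definition Xt :: "nat \<Rightarrow> nat \<Rightarrow> (nat \<Rightarrow> real) set" where
  "Xt n l = {x \<in> frac_box n. (\<Sum>i<n. x i) \<le> real l}"

definition Yt :: "nat \<Rightarrow> nat set set \<Rightarrow> (nat \<Rightarrow> real) \<Rightarrow> (nat \<Rightarrow> real) set" where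
  "Yt n I xt = {y \<in> frac_box n. y \<in> matroid_polytope n I \<and> (\<forall>i<n. y i \<le> xt i)}"

text \<open>WTP function; b j = None encodes b_j = infinity.\<close>
definition wtp :: "nat \<Rightarrow> 'c set \<Rightarrow> ('c \<Rightarrow> real) \<Rightarrow> ('c \<Rightarrow> real option) \<Rightarrow> ('c \<Rightarrow> nat \<Rightarrow> real)
                   \<Rightarrow> (nat \<Rightarrow> real) \<Rightarrow> real" where
  "wtp n C c b w y = (\<Sum>j\<in>C. c j * (case b j of None \<Rightarrow> (\<Sum>i<n. y i * w j i)
                                           | Some bj \<Rightarrow> min bj (\<Sum>i<n. y i * w j i)))"

definition is_wtp :: "nat \<Rightarrow> 'c set \<Rightarrow> ('c \<Rightarrow> real) \<Rightarrow> ('c \<Rightarrow> real option) \<Rightarrow> ('c \<Rightarrow> nat \<Rightarrow> real) \<Rightarrow> bool" where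
  "is_wtp n C c b w \<longleftrightarrow> finite C \<and> (\<forall>j\<in>C. c j > 0 \<and> (\<forall>bj. b j = Some bj \<longrightarrow> bj \<ge> 0)
                          \<and> (\<forall>i<n. w j i \<ge> 0))"

definition reward :: "nat set set \<Rightarrow> ((nat \<Rightarrow> real) \<Rightarrow> real) \<Rightarrow> nat set \<Rightarrow> real" where
  "reward I f x = Max ((\<lambda>y. f (indic y)) ` {y \<in> I. y \<subseteq> x})"

definition fracs :: "nat \<Rightarrow> (nat \<Rightarrow> real) \<Rightarrow> nat set" where
  "fracs n x = {i \<in> {0..<n}. 0 < x i \<and> x i < 1}"

definition pipage_step :: "nat \<Rightarrow> (nat \<Rightarrow> real) \<Rightarrow> (nat \<Rightarrow> real) pmf" where
  "pipage_step n x =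
    (if card (fracs n x) \<ge> 2 then
       (let i = Min (fracs n x); j = Min (fracs n x - {i});
            e1 = min (1 - x i) (x j); e2 = min (x i) (1 - x j) in
        map_pmf (\<lambda>b. if b then x(i := x i + e1, j := x j - e1) else x(i := x i - e2, j := x j + e2))
                (bernoulli_pmf (e2 / (e1 + e2))))
     else if card (fracs n x) = 1 then
       (let i = the_elem (fracs n x) in
        map_pmf (\<lambda>b. if b then x(i := 1) else x(i := 0)) (bernoulli_pmf (x i)))
     else return_pmf x)"

fun pipage_iter :: "nat \<Rightarrow> nat \<Rightarrow> (nat \<Rightarrow> real) \<Rightarrow> (nat \<Rightarrow> real) pmf" where
  "pipage_iter n 0 x = return_pmf x"
| "pipage_iter n (Suc k) x = pipage_step n x \<bind> pipage_iter n k"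

text \<open>Each step makes at least one coordinate integral, so n steps suffice.
The integral result is returned as the set of its 1-coordinates.\<close>
definition pipage :: "nat \<Rightarrow> (nat \<Rightarrow> real) \<Rightarrow> nat set pmf" where
  "pipage n x = map_pmf (\<lambda>z. {i \<in> {0..<n}. z i = 1}) (pipage_iter n n x)"

definition Qmap :: "nat \<Rightarrow> (nat \<Rightarrow> real) \<Rightarrow> (nat \<Rightarrow> real) \<Rightarrow> nat set \<Rightarrow> nat set pmf" where
  "Qmap n yt xt x = map_pmf (\<lambda>c. {i \<in> x. c i})
      (Pi_pmf {0..<n} False (\<lambda>i. bernoulli_pmf (if xt i \<noteq> 0 then yt i / xt i else 0)))"

definition is_crs :: "nat \<Rightarrow> nat set set \<Rightarrow> (nat set \<Rightarrow> nat set pmf) \<Rightarrow> bool" where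
  "is_crs n I \<phi> \<longleftrightarrow> (\<forall>z \<subseteq> {0..<n}. \<forall>y \<in> set_pmf (\<phi> z). y \<in> I \<and> y \<subseteq> z)"

end

theory Submission
  imports Defs
begin

theorem lemma12:
  fixes n l :: nat and I :: "nat set set" and C :: "'c set" and c :: "'c \<Rightarrow> real"
    and b :: "'c \<Rightarrow> real option" and w :: "'c \<Rightarrow> nat \<Rightarrow> real"
    and xt yt :: "nat \<Rightarrow> real" and \<phi> :: "nat set \<Rightarrow> nat set pmf"
  assumes "matroid n I"
    and "is_wtp n C c b w"
    and "xt \<in> Xt n l"
    and "yt \<in> Yt n I xt"
    and "is_crs n I \<phi>"
  shows "measure_pmf.expectation (pipage n xt) (\<lambda>x. reward I (wtp n C c b w) x)
         \<ge> measure_pmf.expectation (pipage n xt)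
             (\<lambda>x. measure_pmf.expectation (Qmap n yt xt x \<bind> \<phi>) (\<lambda>y. wtp n C c b w (indic y)))"
proof -
  define f where "f = wtp n C c b w"
  have IP: "I \<subseteq> Pow {0..<n}" using assms(1) unfolding matroid_def by auto
  have finI: "finite I" using finite_subset[OF IP] by auto
  have emI: "{} \<in> I" using assms(1) unfolding matroid_def by auto
  define M where "M = Max ((\<lambda>A. \<bar>f (indic A)\<bar>) ` I)"
  have Mb: "\<And>A. A \<in> I \<Longrightarrow> \<bar>f (indic A)\<bar> \<le> M"
    unfolding M_def using finI by (intro Max_ge) auto
  have S: "y \<in> I \<and> y \<subseteq> x" if "y \<in> set_pmf (Qmap n yt xt x \<bind> \<phi>)" for x y
  proof -
    from that obtain z where z: "z \<in> set_pmf (Qmap n yt xt x)" "y \<in> set_pmf (\<phi> z)" by auto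
    from z(1) obtain cc where cc: "cc \<in> set_pmf (Pi_pmf {0..<n} False
        (\<lambda>i. bernoulli_pmf (if xt i \<noteq> 0 then yt i / xt i else 0)))" "z = {i \<in> x. cc i}"
      unfolding Qmap_def by auto
    have "\<forall>i. i \<notin> {0..<n} \<longrightarrow> cc i = False" using subsetD[OF set_Pi_pmf_subset[OF finite_atLeastLessThan] cc(1)] by simp
    hence zs: "z \<subseteq> {0..<n}" "z \<subseteq> x" using cc(2) by auto
    thus ?thesis using assms(5) z(2) unfolding is_crs_def by blast
  qed
  have inner_int: "integrable (measure_pmf (Qmap n yt xt x \<bind> \<phi>)) (\<lambda>y. f (indic y))" for x
    by (rule measure_pmf.integrable_const_bound[where B=M])
       (auto intro!: AE_pmfI dest!: S intro: Mb)
  have inner_le: "measure_pmf.expectation (Qmap n yt xt x \<bind> \<phi>) (\<lambda>y. f (indic y)) \<le> reward I f x" for x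
  proof (rule measure_pmf.integral_le_const[OF inner_int], rule AE_pmfI)
    fix y assume "y \<in> set_pmf (Qmap n yt xt x \<bind> \<phi>)"
    then have "y \<in> I" "y \<subseteq> x" using S by auto
    then show "f (indic y) \<le> reward I f x" unfolding reward_def
      using finI by (intro Max_ge) auto
  qed
  have inner_abs: "\<bar>measure_pmf.expectation (Qmap n yt xt x \<bind> \<phi>) (\<lambda>y. f (indic y))\<bar> \<le> M" for x
  proof -
    have "\<bar>measure_pmf.expectation (Qmap n yt xt x \<bind> \<phi>) (\<lambda>y. f (indic y))\<bar>
          \<le> measure_pmf.expectation (Qmap n yt xt x \<bind> \<phi>) (\<lambda>y. \<bar>f (indic y)\<bar>)"
      by (rule integral_abs_bound)
    also have "\<dots> \<le> M"
      by (rule measure_pmf.integral_le_const)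
         (auto intro!: AE_pmfI dest!: S intro: Mb inner_int)
    finally show ?thesis .
  qed
  have rew_abs: "\<bar>reward I f x\<bar> \<le> M" for x
  proof -
    have fin: "finite ((\<lambda>y. f (indic y)) ` {y \<in> I. y \<subseteq> x})" using finI by auto
    have ne: "(\<lambda>y. f (indic y)) ` {y \<in> I. y \<subseteq> x} \<noteq> {}" using emI by auto
    obtain A where A: "A \<in> I" "reward I f x = f (indic A)"
      using Max_in[OF fin ne] unfolding reward_def by auto
    thus ?thesis using Mb by auto
  qed
  have i1: "integrable (measure_pmf (pipage n xt)) (\<lambda>x. reward I f x)"
    by (rule measure_pmf.integrable_const_bound[where B=M]) (auto intro: rew_abs)
  have i2: "integrable (measure_pmf (pipage n xt))
      (\<lambda>x. measure_pmf.expectation (Qmap n yt xt x \<bind> \<phi>) (\<lambda>y. f (indic y)))"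
    by (rule measure_pmf.integrable_const_bound[where B=M]) (auto intro: inner_abs)
  have "measure_pmf.expectation (pipage n xt)
      (\<lambda>x. measure_pmf.expectation (Qmap n yt xt x \<bind> \<phi>) (\<lambda>y. f (indic y)))
     \<le> measure_pmf.expectation (pipage n xt) (\<lambda>x. reward I f x)"
    by (rule integral_mono[OF i2 i1 inner_le])
  thus ?thesis unfolding f_def .
qed

end
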